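(* For any two density operators $\rho$ and $\sigma$ on a finite-dimensional Hilbert space, $\lim_{\alpha\to1}S_{\alpha}(\rho\|\sigma)=U(\rho\|\sigma)$.
   Context: A density operator is a positive semidefinite operator of unit trace; $\operatorname{supp}(\rho)$ is the span of eigenvectors with nonzero eigenvalues. For $\alpha>0$, $\alpha\neq1$, the quantum relative $\alpha$-entropy is $S_{\alpha}(\rho\|\sigma)=\frac{\alpha}{1-\alpha}\log\operatorname{Tr}(\rho\sigma^{\alpha-1})-\frac{1}{1-\alpha}\log\operatorname{Tr}(\rho^{\alpha})+\log\operatorname{Tr}(\sigma^{\alpha})$ if $\operatorname{supp}(\rho)\subseteq\operatorname{supp}(\sigma)$ (negative powers on the support), and $+\infty$ otherwise. Umegaki's relative entropy is $U(\rho\|\sigma)=\operatorname{Tr}(\rho\log\rho-\rho\log\sigma)$ when $\operatorname{supp}(\rho)\subseteq\operatorname{supp}(\sigma)$ and $+\infty$ otherwise. Conventions: $0\cdot(\pm\infty)=0$, $\log0=-\infty$, $\log(+\infty)=+\infty$. *)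

theory Defs
  imports "HOL-Library.Extended_Real" "Jordan_Normal_Form.Schur_Decomposition"
begin

text \<open>Finite-dimensional Hilbert space = complex vectors of dimension n;
  operators = complex n x n matrices (Jordan_Normal_Form).\<close>

definition mtrace :: "complex mat \<Rightarrow> complex" where
  "mtrace A = (\<Sum>i<dim_row A. A $$ (i, i))"

definition diag_of :: "nat \<Rightarrow> (nat \<Rightarrow> complex) \<Rightarrow> complex mat" where
  "diag_of n d = mat n n (\<lambda>(i, j). if i = j then d i else 0)"

definition unitary_mat :: "nat \<Rightarrow> complex mat \<Rightarrow> bool" where
  "unitary_mat n U \<longleftrightarrow> U \<in> carrier_mat n n \<and> U * mat_adjoint U = 1\<^sub>m n
     \<and> mat_adjoint U * U = 1\<^sub>m n"

definition hermitian_mat :: "nat \<Rightarrow> complex mat \<Rightarrow> bool" where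
  "hermitian_mat n A \<longleftrightarrow> A \<in> carrier_mat n n \<and> mat_adjoint A = A"

definition psd_mat :: "nat \<Rightarrow> complex mat \<Rightarrow> bool" where
  "psd_mat n A \<longleftrightarrow> A \<in> carrier_mat n n \<and>
     (\<forall>v \<in> carrier_vec n. \<exists>r::real. r \<ge> 0 \<and> cscalar_prod (A *\<^sub>v v) v = complex_of_real r)"

definition density_op :: "nat \<Rightarrow> complex mat \<Rightarrow> bool" where
  "density_op n \<rho> \<longleftrightarrow> psd_mat n \<rho> \<and> mtrace \<rho> = 1"

text \<open>Functional calculus for a Hermitian matrix: f(A) = U f(D) U^* for a unitary
  diagonalisation A = U D U^* with real diagonal D (independent of the choice).\<close>
definition mat_fun :: "nat \<Rightarrow> (real \<Rightarrow> real) \<Rightarrow> complex mat \<Rightarrow> complex mat" where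
  "mat_fun n f A = (SOME B. \<exists>U d. unitary_mat n U
      \<and> A = U * diag_of n (\<lambda>i. complex_of_real (d i)) * mat_adjoint U
      \<and> B = U * diag_of n (\<lambda>i. complex_of_real (f (d i))) * mat_adjoint U)"

definition supp :: "nat \<Rightarrow> complex mat \<Rightarrow> complex vec set" where
  "supp n A = LinearCombinations.module.span class_ring (module_vec TYPE(complex) n)
     {v \<in> carrier_vec n. \<exists>c. c \<noteq> 0 \<and> A *\<^sub>v v = c \<cdot>\<^sub>v v}"

definition pow_supp :: "real \<Rightarrow> real \<Rightarrow> real" where
  "pow_supp a x = (if x > 0 then x powr a else 0)"

text \<open>Logarithm on the support, 0 on the kernel (encodes 0 log 0 = 0).\<close>
definition log_supp :: "real \<Rightarrow> real" where
  "log_supp x = (if x > 0 then ln x else 0)"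

definition renyi_rel_entropy :: "nat \<Rightarrow> real \<Rightarrow> complex mat \<Rightarrow> complex mat \<Rightarrow> ereal" where
  "renyi_rel_entropy n \<alpha> \<rho> \<sigma> =
     (if supp n \<rho> \<subseteq> supp n \<sigma> then
        ereal (\<alpha> / (1 - \<alpha>) * ln (Re (mtrace (\<rho> * mat_fun n (pow_supp (\<alpha> - 1)) \<sigma>)))
               - 1 / (1 - \<alpha>) * ln (Re (mtrace (mat_fun n (pow_supp \<alpha>) \<rho>)))
               + ln (Re (mtrace (mat_fun n (pow_supp \<alpha>) \<sigma>))))
      else \<infinity>)"

definition umegaki :: "nat \<Rightarrow> complex mat \<Rightarrow> complex mat \<Rightarrow> ereal" where
  "umegaki n \<rho> \<sigma> =
     (if supp n \<rho> \<subseteq> supp n \<sigma> then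
        ereal (Re (mtrace (\<rho> * mat_fun n log_supp \<rho> - \<rho> * mat_fun n log_supp \<sigma>)))
      else \<infinity>)"

end

theory Submission
  imports Defs
begin

lemma adj_carrier[simp]: "mat_adjoint A \<in> carrier_mat (dim_col A) (dim_row A)"
  unfolding mat_adjoint_def by (auto simp: mat_of_rows_def)

lemma adj_dims[simp]: "dim_row (mat_adjoint A) = dim_col A" "dim_col (mat_adjoint A) = dim_row A"
  unfolding mat_adjoint_def by (auto simp: mat_of_rows_def)

lemma adj_index[simp]: "i < dim_col A \<Longrightarrow> j < dim_row A \<Longrightarrow>
   mat_adjoint (A :: complex mat) $$ (i,j) = cnj (A $$ (j,i))"
  unfolding mat_adjoint_def by (auto simp: mat_of_rows_def)

lemma adj_adj[simp]: "mat_adjoint (mat_adjoint (A :: complex mat)) = A"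
  by (rule eq_matI, auto)

lemma adj_mult: assumes "A \<in> carrier_mat n m" "B \<in> carrier_mat m k"
  shows "mat_adjoint (A * B :: complex mat) = mat_adjoint B * mat_adjoint A"
  using assms by (intro eq_matI, auto simp: scalar_prod_def intro!: sum.cong)

lemma adj_one[simp]: "mat_adjoint (1\<^sub>m n :: complex mat) = 1\<^sub>m n"
  by (rule eq_matI, auto)

lemma mtrace_comm: assumes "A \<in> carrier_mat n m" "B \<in> carrier_mat m n"
  shows "mtrace (A * B :: complex mat) = mtrace (B * A)"
proof -
  have "mtrace (A * B) = (\<Sum>i<n. \<Sum>l<m. A $$ (i,l) * B $$ (l,i))"
    using assms unfolding mtrace_def by (auto simp: scalar_prod_def atLeast0LessThan intro!: sum.cong)
  also have "\<dots> = (\<Sum>l<m. \<Sum>i<n. B $$ (l,i) * A $$ (i,l))"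
    by (subst sum.swap) (simp add: mult.commute)
  also have "\<dots> = mtrace (B * A)"
    using assms unfolding mtrace_def by (auto simp: scalar_prod_def atLeast0LessThan intro!: sum.cong)
  finally show ?thesis .
qed

lemma mtrace_minus: assumes "A \<in> carrier_mat n n" "B \<in> carrier_mat n n"
  shows "mtrace (A - B :: complex mat) = mtrace A - mtrace B"
  using assms unfolding mtrace_def by (auto simp: sum_subtractf)

lemma cscalar_adj: assumes "A \<in> carrier_mat n m" "v \<in> carrier_vec m" "w \<in> carrier_vec n"
  shows "(A *\<^sub>v v) \<bullet>c w = v \<bullet>c (mat_adjoint (A :: complex mat) *\<^sub>v w)"
proof -
  have "(A *\<^sub>v v) \<bullet>c w = (\<Sum>i<n. (\<Sum>l<m. A $$ (i,l) * v $ l) * cnj (w $ i))"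
    using assms by (auto simp: scalar_prod_def atLeast0LessThan intro!: sum.cong)
  also have "\<dots> = (\<Sum>l<m. v $ l * cnj (\<Sum>i<n. cnj (A $$ (i,l)) * w $ i))"
    by (simp add: sum_distrib_left sum_distrib_right sum.swap[of _ "{..<n}"] mult_ac)
  also have "\<dots> = v \<bullet>c (mat_adjoint (A :: complex mat) *\<^sub>v w)"
    using assms by (auto simp: scalar_prod_def atLeast0LessThan intro!: sum.cong)
  finally show ?thesis .
qed

lemma quad_two: assumes A: "A \<in> carrier_mat n n" and ij: "i < n" "j < n" "i \<noteq> j"
  shows "(A *\<^sub>v vec n (\<lambda>k. (if k = i then 1 else 0) + (if k = j then c else 0))) \<bullet>c
          vec n (\<lambda>k. (if k = i then 1 else 0) + (if k = j then c else 0))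
       = A $$ (i,i) + c * A $$ (i,j) + cnj c * A $$ (j,i) + c * cnj c * A $$ (j,j)"
proof -
  let ?v = "vec n (\<lambda>k. (if k = i then 1 else 0) + (if k = j then c else 0)) :: complex vec"
  have r: "(A *\<^sub>v ?v) $ k = A $$ (k,i) + c * A $$ (k,j)" if k: "k < n" for k
  proof -
    have "(A *\<^sub>v ?v) $ k = (\<Sum>l\<in>{0..<n}. A $$ (k,l) * (if l = i then 1 else 0)) + 
          (\<Sum>l\<in>{0..<n}. A $$ (k,l) * (if l = j then c else 0))"
      using A k by (simp add: scalar_prod_def distrib_left sum.distrib)
    also have "\<dots> = A $$ (k,i) + c * A $$ (k,j)"
      using ij by (simp add: if_distrib mult.commute cong: if_cong)
    finally show ?thesis .
  qed
  have "(A *\<^sub>v ?v) \<bullet>c ?v = (\<Sum>k\<in>{0..<n}. (A $$ (k,i) + c * A $$ (k,j)) *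
        ((if k = i then 1 else 0) + (if k = j then cnj c else 0)))"
    using A r by (auto simp: scalar_prod_def intro!: sum.cong)
  also have "\<dots> = (\<Sum>k\<in>{0..<n}. (A $$ (k,i) + c * A $$ (k,j)) * (if k = i then 1 else 0)) +
     (\<Sum>k\<in>{0..<n}. (A $$ (k,i) + c * A $$ (k,j)) * (if k = j then cnj c else 0))"
    by (simp add: distrib_left sum.distrib)
  also have "\<dots> = A $$ (i,i) + c * A $$ (i,j) + cnj c * A $$ (j,i) + c * cnj c * A $$ (j,j)"
    using ij by (simp add: if_distrib cong: if_cong) (simp add: algebra_simps)
  finally show ?thesis .
qed

lemma quad_one: fixes A :: "complex mat" assumes A: "A \<in> carrier_mat n n" and ij: "i < n"
  shows "(A *\<^sub>v vec n (\<lambda>k. if k = i then 1 else 0)) \<bullet>c vec n (\<lambda>k. if k = i then 1 else 0)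
       = A $$ (i,i)"
proof -
  let ?v = "vec n (\<lambda>k. if k = i then 1 else 0) :: complex vec"
  have r: "(A *\<^sub>v ?v) $ k = A $$ (k,i)" if "k < n" for k
    using A ij that by (simp add: scalar_prod_def if_distrib cong: if_cong)
  have "(A *\<^sub>v ?v) \<bullet>c ?v = (\<Sum>k\<in>{0..<n}. A $$ (k,i) * (if k = i then 1 else 0))"
    using A r by (auto simp: scalar_prod_def intro!: sum.cong)
  also have "\<dots> = A $$ (i,i)" using ij by (simp add: if_distrib cong: if_cong)
  finally show ?thesis .
qed

lemma psd_carrier: "psd_mat n A \<Longrightarrow> A \<in> carrier_mat n n"
  unfolding psd_mat_def by auto

lemma psd_hermitian: assumes "psd_mat n A" shows "mat_adjoint A = A"
proof -
  have A: "A \<in> carrier_mat n n" using assms unfolding psd_mat_def by auto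
  have real: "Im ((A *\<^sub>v v) \<bullet>c v) = 0" if "v \<in> carrier_vec n" for v
    using assms that unfolding psd_mat_def by force
  have diag: "Im (A $$ (i,i)) = 0" if "i < n" for i
    using real[of "vec n (\<lambda>k. if k = i then 1 else 0)"] quad_one[OF A that] by auto
  have off: "A $$ (j,i) = cnj (A $$ (i,j))" if "i < n" "j < n" "i \<noteq> j" for i j
  proof -
    have 1: "Im (A $$ (i,j) + A $$ (j,i)) = 0"
      using real[of "vec n (\<lambda>k. (if k = i then 1 else 0) + (if k = j then 1 else 0))"]
        quad_two[OF A that, of 1] diag[OF that(1)] diag[OF that(2)] by simp
    have 2: "Re (A $$ (i,j) - A $$ (j,i)) = 0"
      using real[of "vec n (\<lambda>k. (if k = i then 1 else 0) + (if k = j then \<i> else 0))"]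
        quad_two[OF A that, of \<i>] diag[OF that(1)] diag[OF that(2)] by simp
    show ?thesis using 1 2 by (simp add: complex_eq_iff)
  qed
  show ?thesis
  proof (rule eq_matI)
    fix i j assume "i < dim_row A" "j < dim_col A"
    then show "mat_adjoint A $$ (i, j) = A $$ (i, j)" using A diag off
    proof (cases "i = j")
      case True
      then show ?thesis using A diag \<open>i < dim_row A\<close> by (simp add: complex_eq_iff)
    next
      case False
      then show ?thesis using A off[of j i] \<open>i < dim_row A\<close> \<open>j < dim_col A\<close> by simp
    qed
  qed (use A in auto)
qed

lemma herm_entry: "mat_adjoint A = A \<Longrightarrow> A \<in> carrier_mat n n \<Longrightarrow> i < n \<Longrightarrow> j < n \<Longrightarrow>
   A $$ (j,i) = cnj (A $$ (i,j))"
  by (metis adj_index carrier_matD(1) carrier_matD(2))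

lemma mtrace_sq_herm: fixes A :: "complex mat" assumes A: "A \<in> carrier_mat n n" and h: "mat_adjoint A = A"
  shows "mtrace (A * A) = complex_of_real (\<Sum>i<n. \<Sum>l<n. (cmod (A $$ (i,l)))^2)"
proof -
  have "mtrace (A * A) = (\<Sum>i<n. \<Sum>l<n. A $$ (i,l) * A $$ (l,i))"
    using A unfolding mtrace_def by (auto simp: scalar_prod_def atLeast0LessThan intro!: sum.cong)
  also have "\<dots> = (\<Sum>i<n. \<Sum>l<n. complex_of_real ((cmod (A $$ (i,l)))^2))"
  proof (intro sum.cong refl)
    fix i l assume "i \<in> {..<n}" "l \<in> {..<n}"
    then have "A $$ (l,i) = cnj (A $$ (i,l))" using herm_entry[OF h A, of i l] by simp
    then show "A $$ (i,l) * A $$ (l,i) = complex_of_real ((cmod (A $$ (i,l)))^2)"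
      by (simp only: complex_norm_square)
  qed
  finally show ?thesis by simp
qed

lemma herm_zero: fixes A :: "complex mat" assumes A: "A \<in> carrier_mat n n" and h: "mat_adjoint A = A"
  and ev: "\<And>\<mu> v. v \<in> carrier_vec n \<Longrightarrow> v \<noteq> 0\<^sub>v n \<Longrightarrow> A *\<^sub>v v = \<mu> \<cdot>\<^sub>v v \<Longrightarrow> \<mu> = 0"
  shows "A = 0\<^sub>m n n"
proof -
  obtain as where cp: "char_poly A = (\<Prod>a\<leftarrow>as. [:- a, 1:])" using char_poly_factorized[OF A] by auto
  obtain B P Q where sch: "schur_decomposition A as = (B,P,Q)" by (cases "schur_decomposition A as") auto
  note S = schur_decomposition[OF A cp sch]
  have wit: "similar_mat_wit A B P Q" and ut: "upper_triangular B" and dg: "diag_mat B = as" using S by auto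
  from wit A have B: "B \<in> carrier_mat n n" and P: "P \<in> carrier_mat n n" and Q: "Q \<in> carrier_mat n n"
    and QP: "Q * P = 1\<^sub>m n" and AB: "A = P * B * Q"
    unfolding similar_mat_wit_def Let_def by auto
  have as0: "a = 0" if "a \<in> set as" for a
  proof -
    have "poly (char_poly A) a = 0" unfolding cp using that
      by (auto simp: poly_prod_list prod_list_zero_iff)
    then have "eigenvalue A a" using eigenvalue_root_char_poly[OF A] by simp
    then obtain v where "eigenvector A v a" unfolding eigenvalue_def by auto
    then show ?thesis using ev A unfolding eigenvector_def by auto
  qed
  have Bd: "B $$ (i,i) = 0" if "i < n" for i
  proof -
    have "B $$ (i,i) = as ! i" using dg[symmetric] that B unfolding diag_mat_def by auto
    moreover have "i < length as" using dg that B unfolding diag_mat_def by auto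
    ultimately show ?thesis using as0 by auto
  qed
  have BB: "mtrace (B * B) = 0"
  proof -
    have "(B * B) $$ (i,i) = 0" if i: "i < n" for i
    proof -
      have "(B * B) $$ (i,i) = (\<Sum>l\<in>{0..<n}. B $$ (i,l) * B $$ (l,i))"
        using B i by (simp add: scalar_prod_def)
      also have "\<dots> = 0"
      proof (rule sum.neutral, intro ballI)
        fix l assume l: "l \<in> {0..<n}"
        show "B $$ (i,l) * B $$ (l,i) = 0"
      proof (cases "l < i")
        case True then show ?thesis using upper_triangularD[OF ut True] B i by simp
      next
        case False
        show ?thesis
        proof (cases "l = i")
          case True then show ?thesis using Bd[OF i] by simp
        next
          case False
          then have "i < l" using \<open>\<not> l < i\<close> by simp
          then show ?thesis using upper_triangularD[OF ut \<open>i < l\<close>] B l by simp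
        qed
      qed
      qed
      finally show ?thesis .
    qed
    then show ?thesis using B unfolding mtrace_def by auto
  qed
  have "A * A = P * (B * B) * Q"
  proof -
    have "A * A = P * B * (Q * P) * B * Q" using AB A B P Q by (simp add: assoc_mult_mat[of _ n n _ n _ n])
    also have "\<dots> = P * (B * B) * Q" using QP B P Q by (simp add: assoc_mult_mat[of _ n n _ n _ n])
    finally show ?thesis .
  qed
  then have "mtrace (A * A) = mtrace ((B * B) * Q * P)"
    using mtrace_comm[of P n n "B * B * Q"] B P Q by (simp add: assoc_mult_mat[of _ n n _ n _ n])
  also have "\<dots> = 0" using QP BB B P Q by (simp add: assoc_mult_mat[of _ n n _ n _ n])
  finally have "complex_of_real (\<Sum>i<n. \<Sum>l<n. (cmod (A $$ (i,l)))^2) = 0"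
    using mtrace_sq_herm[OF A h] by simp
  then have "(\<Sum>i<n. \<Sum>l<n. (cmod (A $$ (i,l)))^2) = 0"
    by (simp only: of_real_eq_0_iff)
  then have "\<forall>i\<in>{..<n}. (\<Sum>l<n. (cmod (A $$ (i,l)))^2) = 0"
    by (subst (asm) sum_nonneg_eq_0_iff) (auto intro!: sum_nonneg)
  then have z: "\<forall>i<n. \<forall>l<n. (cmod (A $$ (i,l)))^2 = 0"
    by (auto simp: sum_nonneg_eq_0_iff)
  show ?thesis
  proof (rule eq_matI)
    fix i j assume "i < dim_row (0\<^sub>m n n :: complex mat)" "j < dim_col (0\<^sub>m n n :: complex mat)"
    then show "A $$ (i, j) = 0\<^sub>m n n $$ (i, j)" using z by simp
  qed (use A in auto)
qed

lemma mtrace_one[simp]: "mtrace (1\<^sub>m n :: complex mat) = of_nat n"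
  unfolding mtrace_def by simp

lemma zero_mat_mult_vec: "v \<in> carrier_vec n \<Longrightarrow> (0\<^sub>m k n :: complex mat) *\<^sub>v v = 0\<^sub>v k"
  by (intro eq_vecI) (auto simp: scalar_prod_def)

lemma mat_minus_self: "A \<in> carrier_mat n m \<Longrightarrow> (A :: complex mat) - A = 0\<^sub>m n m"
  by (intro eq_matI) auto

lemma mat_minus_zero: "A \<in> carrier_mat n m \<Longrightarrow> (A :: complex mat) - 0\<^sub>m n m = A"
  by (intro eq_matI) auto

lemma adj_minus: "A \<in> carrier_mat n m \<Longrightarrow> B \<in> carrier_mat n m \<Longrightarrow>
   mat_adjoint (A - B :: complex mat) = mat_adjoint A - mat_adjoint B"
  by (intro eq_matI) auto

lemma ext_step:
  fixes A U L :: "complex mat"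
  assumes A: "A \<in> carrier_mat n n" and h: "mat_adjoint A = A"
    and U: "U \<in> carrier_mat n k" and kn: "k < n" and UU: "mat_adjoint U * U = 1\<^sub>m k"
    and L: "L \<in> carrier_mat k k" and hL: "mat_adjoint L = L" and AU: "A * U = U * L"
  shows "\<exists>y \<mu>. y \<in> carrier_vec n \<and> y \<noteq> 0\<^sub>v n \<and> mat_adjoint U *\<^sub>v y = 0\<^sub>v k \<and> A *\<^sub>v y = \<mu> \<cdot>\<^sub>v y"
proof -
  define Pi where "Pi = U * mat_adjoint U"
  define P where "P = 1\<^sub>m n - Pi"
  have Ua: "mat_adjoint U \<in> carrier_mat k n" using U by auto
  have Pic: "Pi \<in> carrier_mat n n" unfolding Pi_def using U Ua by auto
  have Pc: "P \<in> carrier_mat n n" unfolding P_def using Pic by auto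
  have "mat_adjoint U * A = L * mat_adjoint U"
  proof -
    have "mat_adjoint U * A = mat_adjoint (A * U)" using adj_mult[OF A U] h by simp
    also have "\<dots> = mat_adjoint (U * L)" using AU by simp
    also have "\<dots> = L * mat_adjoint U" using adj_mult[OF U L] hL by simp
    finally show ?thesis .
  qed
  then have PiA: "Pi * A = A * Pi"
  proof -
    assume e: "mat_adjoint U * A = L * mat_adjoint U"
    have "Pi * A = U * (mat_adjoint U * A)" unfolding Pi_def using U Ua A by (rule assoc_mult_mat)
    also have "\<dots> = (U * L) * mat_adjoint U" unfolding e using U L Ua by (simp add: assoc_mult_mat)
    also have "\<dots> = A * Pi" unfolding Pi_def AU[symmetric] using A U Ua by (rule assoc_mult_mat)
    finally show ?thesis .
  qed
  have PA: "P * A = A * P"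
  proof -
    have "P * A = 1\<^sub>m n * A - Pi * A" unfolding P_def by (rule minus_mult_distrib_mat[OF one_carrier_mat Pic A])
    moreover have "A * P = A * 1\<^sub>m n - A * Pi" unfolding P_def by (rule mult_minus_distrib_mat[OF A one_carrier_mat Pic])
    ultimately show ?thesis using PiA A by simp
  qed
  have UUU: "mat_adjoint U * (U * mat_adjoint U) = mat_adjoint U"
    using assoc_mult_mat[OF Ua U Ua, symmetric] UU left_mult_one_mat[OF Ua] by simp
  have PiPi: "Pi * Pi = Pi" unfolding Pi_def
    using assoc_mult_mat[OF U Ua Pic[unfolded Pi_def]] UUU by simp
  have PiP: "Pi * P = 0\<^sub>m n n"
  proof -
    have "Pi * P = Pi * 1\<^sub>m n - Pi * Pi" unfolding P_def by (rule mult_minus_distrib_mat[OF Pic one_carrier_mat Pic])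
    then show ?thesis using PiPi Pic mat_minus_self[OF Pic] by simp
  qed
  have PP: "P * P = P"
  proof -
    have "P * P = 1\<^sub>m n * P - Pi * P" unfolding P_def[of] by (rule minus_mult_distrib_mat[OF one_carrier_mat Pic Pc[unfolded P_def]])
    then show ?thesis using PiP Pc mat_minus_zero[OF Pc] left_mult_one_mat[OF Pc] unfolding P_def by simp
  qed
  have UP: "mat_adjoint U * P = 0\<^sub>m k n"
  proof -
    have "mat_adjoint U * P = mat_adjoint U * 1\<^sub>m n - mat_adjoint U * Pi" unfolding P_def by (rule mult_minus_distrib_mat[OF Ua one_carrier_mat Pic])
    then show ?thesis using UUU Ua mat_minus_self[OF Ua] right_mult_one_mat[OF Ua] unfolding Pi_def by simp
  qed
  have Pih: "mat_adjoint Pi = Pi" unfolding Pi_def using adj_mult[OF U Ua] by simp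
  have Ph: "mat_adjoint P = P" unfolding P_def using adj_minus[OF one_carrier_mat Pic] Pih by simp
  define H where "H = P * A * P"
  have Hc: "H \<in> carrier_mat n n" unfolding H_def using Pc A by auto
  have Hh: "mat_adjoint H = H" unfolding H_def using Pc A h Ph
  proof -
    have "mat_adjoint (P * A * P) = mat_adjoint P * mat_adjoint (P * A)"
      using adj_mult[OF mult_carrier_mat[OF Pc A] Pc] .
    also have "\<dots> = P * (A * P)" using adj_mult[OF Pc A] Ph h by simp
    finally show "mat_adjoint (P * A * P) = P * A * P" using assoc_mult_mat[OF Pc A Pc] by simp
  qed
  show ?thesis
  proof (cases "H = 0\<^sub>m n n")
    case True
    have "P \<noteq> 0\<^sub>m n n"
    proof
      assume "P = 0\<^sub>m n n"
      then have e: "(1\<^sub>m n - Pi) $$ (i,j) = 0" if "i < n" "j < n" for i j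
        unfolding P_def using that by simp
      have "Pi = 1\<^sub>m n"
      proof (rule eq_matI)
        fix i j assume "i < dim_row (1\<^sub>m n :: complex mat)" "j < dim_col (1\<^sub>m n :: complex mat)"
        then show "Pi $$ (i, j) = 1\<^sub>m n $$ (i, j)" using e[of i j] Pic by simp
      qed (use Pic in auto)
      then have "mtrace (U * mat_adjoint U) = of_nat n" unfolding Pi_def by simp
      moreover have "mtrace (U * mat_adjoint U) = of_nat k"
        using mtrace_comm[OF U Ua] UU by simp
      ultimately show False using kn by simp
    qed
    then obtain i j where ij: "i < n" "j < n" "P $$ (i,j) \<noteq> 0" using Pc
      by (metis carrier_matD(1) carrier_matD(2) eq_matI index_zero_mat(1) index_zero_mat(2) index_zero_mat(3))
    define y where "y = P *\<^sub>v unit_vec n j"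
    have yc: "y \<in> carrier_vec n" unfolding y_def using Pc by auto
    have "y $ i = P $$ (i,j)" unfolding y_def using ij Pc
      by (simp add: scalar_prod_def if_distrib cong: if_cong)
    then have "y $ i \<noteq> 0" using ij by simp
    then have y0: "y \<noteq> 0\<^sub>v n" using ij by auto
    have "mat_adjoint U *\<^sub>v y = 0\<^sub>v k" unfolding y_def using UP Ua Pc
      using assoc_mult_mat_vec[OF Ua Pc unit_vec_carrier, symmetric] UP zero_mat_mult_vec[OF unit_vec_carrier] by metis
    moreover have "A *\<^sub>v y = 0 \<cdot>\<^sub>v y"
    proof -
      have "A *\<^sub>v y = (A * (P * P)) *\<^sub>v unit_vec n j" unfolding y_def PP using A Pc by simp
      also have "\<dots> = H *\<^sub>v unit_vec n j" unfolding H_def using PA A Pc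
        by (metis PA A Pc assoc_mult_mat)
      also have "\<dots> = 0 \<cdot>\<^sub>v y" using True yc by auto
      finally show ?thesis .
    qed
    ultimately show ?thesis using yc y0 by blast
  next
    case False
    then obtain \<mu> v where v: "v \<in> carrier_vec n" "v \<noteq> 0\<^sub>v n" "H *\<^sub>v v = \<mu> \<cdot>\<^sub>v v" "\<mu> \<noteq> 0"
      using herm_zero[OF Hc Hh] by blast
    define z where "z = (1 / \<mu>) \<cdot>\<^sub>v ((A * P) *\<^sub>v v)"
    have zc: "z \<in> carrier_vec n" unfolding z_def using A Pc v by auto
    have vz: "v = P *\<^sub>v z"
    proof -
      have Hv: "H *\<^sub>v v = P *\<^sub>v (A *\<^sub>v (P *\<^sub>v v))"
      proof -
        have "H *\<^sub>v v = (P * A) *\<^sub>v (P *\<^sub>v v)" unfolding H_def by (rule assoc_mult_mat_vec[OF mult_carrier_mat[OF Pc A] Pc v(1)])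
        also have "\<dots> = P *\<^sub>v (A *\<^sub>v (P *\<^sub>v v))" by (rule assoc_mult_mat_vec[OF Pc A]) (use Pc v in auto)
        finally show ?thesis .
      qed
      have "P *\<^sub>v z = (1 / \<mu>) \<cdot>\<^sub>v (H *\<^sub>v v)" unfolding z_def Hv using A Pc v
        by (simp add: mult_mat_vec[of _ n n])
      also have "\<dots> = v" using v by (simp add: smult_smult_assoc)
      finally show ?thesis by simp
    qed
    have "mat_adjoint U *\<^sub>v v = 0\<^sub>v k" unfolding vz using UP Ua Pc zc
      using assoc_mult_mat_vec[OF Ua Pc zc, symmetric] UP zero_mat_mult_vec[OF zc] by metis
    moreover have "P *\<^sub>v v = v" unfolding vz using PP Pc zc
      using assoc_mult_mat_vec[OF Pc Pc zc, symmetric] PP by metis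
    moreover have "A *\<^sub>v v = \<mu> \<cdot>\<^sub>v v"
    proof -
      have "A *\<^sub>v v = A *\<^sub>v (P *\<^sub>v (P *\<^sub>v v))" using \<open>P *\<^sub>v v = v\<close> by simp
      also have "\<dots> = H *\<^sub>v v" unfolding H_def using PA A Pc v
        by (metis PA A Pc v(1) assoc_mult_mat assoc_mult_mat_vec mult_carrier_mat)
      finally show ?thesis using v by simp
    qed
    ultimately show ?thesis using v by blast
  qed
qed

definition Umat :: "nat \<Rightarrow> nat \<Rightarrow> (nat \<Rightarrow> complex vec) \<Rightarrow> complex mat" where
  "Umat n k u = mat n k (\<lambda>(r,c). u c $ r)"

lemma cprod_sum: "w \<in> carrier_vec n \<Longrightarrow> v \<bullet>c w = (\<Sum>r<n. v $ r * cnj (w $ r))"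
  by (auto simp: scalar_prod_def atLeast0LessThan)

lemma cprod_sym: "v \<in> carrier_vec n \<Longrightarrow> w \<in> carrier_vec n \<Longrightarrow> v \<bullet>c w = cnj (w \<bullet>c v)"
  by (simp add: cprod_sum mult.commute)

lemma Umat_carrier[simp]: "Umat n k u \<in> carrier_mat n k"
  unfolding Umat_def by auto

lemma Umat_dims[simp]: "dim_row (Umat n k u) = n" "dim_col (Umat n k u) = k"
  unfolding Umat_def by auto

lemma Umat_UU: assumes c: "\<forall>i<k. u i \<in> carrier_vec n"
  and o: "\<forall>i<k. \<forall>j<k. u j \<bullet>c u i = (if i = j then 1 else 0)"
  shows "mat_adjoint (Umat n k u) * Umat n k u = 1\<^sub>m k"
proof (rule eq_matI)
  fix i j assume ij: "i < dim_row (1\<^sub>m k :: complex mat)" "j < dim_col (1\<^sub>m k :: complex mat)"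
  then have "(mat_adjoint (Umat n k u) * Umat n k u) $$ (i,j) = (\<Sum>r<n. u j $ r * cnj (u i $ r))"
    unfolding Umat_def by (auto simp: scalar_prod_def atLeast0LessThan mult.commute intro!: sum.cong)
  also have "\<dots> = u j \<bullet>c u i" using c ij cprod_sum[of "u i" n "u j"] by simp
  finally show "(mat_adjoint (Umat n k u) * Umat n k u) $$ (i,j) = 1\<^sub>m k $$ (i,j)"
    using o ij by simp
qed auto

lemma Umat_AU: assumes A: "A \<in> carrier_mat n n" and c: "\<forall>i<k. u i \<in> carrier_vec n"
  and e: "\<forall>i<k. A *\<^sub>v u i = complex_of_real (lam i) \<cdot>\<^sub>v u i"
  shows "A * Umat n k u = Umat n k u * diag_of k (\<lambda>i. complex_of_real (lam i))"
proof (rule eq_matI)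
  fix r j assume rj: "r < dim_row (Umat n k u * diag_of k (\<lambda>i. complex_of_real (lam i)))"
    "j < dim_col (Umat n k u * diag_of k (\<lambda>i. complex_of_real (lam i)))"
  then have r: "r < n" and j: "j < k" unfolding diag_of_def Umat_def by auto
  have cu: "col (Umat n k u) j = u j" using c j unfolding Umat_def by (auto intro!: eq_vecI)
  have "(A * Umat n k u) $$ (r,j) = (A *\<^sub>v u j) $ r" using A r j cu by simp
  also have "\<dots> = complex_of_real (lam j) * u j $ r" using e c j r by (metis carrier_vecD index_smult_vec(1))
  also have "\<dots> = (Umat n k u * diag_of k (\<lambda>i. complex_of_real (lam i))) $$ (r,j)"
    using r j unfolding Umat_def diag_of_def by (simp add: scalar_prod_def if_distrib cong: if_cong)
  finally show "(A * Umat n k u) $$ (r,j) = (Umat n k u * diag_of k (\<lambda>i. complex_of_real (lam i))) $$ (r,j)" .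
qed (use A in \<open>auto simp: diag_of_def\<close>)

lemma diag_of_carrier[simp]: "diag_of n d \<in> carrier_mat n n"
  unfolding diag_of_def by auto

lemma adj_diag_real: "mat_adjoint (diag_of k (\<lambda>i. complex_of_real (lam i))) = diag_of k (\<lambda>i. complex_of_real (lam i))"
  by (rule eq_matI) (auto simp: diag_of_def)

lemma Umat_adj_vec: assumes c: "\<forall>i<k. u i \<in> carrier_vec n" and y: "y \<in> carrier_vec n" and i: "i < k"
  shows "(mat_adjoint (Umat n k u) *\<^sub>v y) $ i = y \<bullet>c u i"
  using c y i unfolding Umat_def by (auto simp: scalar_prod_def mult.commute intro!: sum.cong)

lemma onb_step:
  fixes A :: "complex mat"
  assumes A: "A \<in> carrier_mat n n" and h: "mat_adjoint A = A" and kn: "k < n"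
    and c: "\<forall>i<k. u i \<in> carrier_vec n"
    and o: "\<forall>i<k. \<forall>j<k. u j \<bullet>c u i = (if i = j then 1 else 0)"
    and e: "\<forall>i<k. A *\<^sub>v u i = complex_of_real (lam i) \<cdot>\<^sub>v u i"
  shows "\<exists>x m. x \<in> carrier_vec n \<and> x \<bullet>c x = 1 \<and> (\<forall>i<k. x \<bullet>c u i = 0)
     \<and> A *\<^sub>v x = complex_of_real m \<cdot>\<^sub>v x"
proof -
  let ?U = "Umat n k u" and ?L = "diag_of k (\<lambda>i. complex_of_real (lam i))"
  obtain y \<mu> where y: "y \<in> carrier_vec n" "y \<noteq> 0\<^sub>v n" "mat_adjoint ?U *\<^sub>v y = 0\<^sub>v k"
     "A *\<^sub>v y = \<mu> \<cdot>\<^sub>v y"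
    using ext_step[OF A h Umat_carrier kn Umat_UU[OF c o] diag_of_carrier adj_diag_real Umat_AU[OF A c e]]
    by blast
  have orth: "y \<bullet>c u i = 0" if "i < k" for i
    using Umat_adj_vec[OF c y(1) that] y(3) that by simp
  define s where "s = y \<bullet>c y"
  have s0: "s \<noteq> 0" unfolding s_def using y by simp
  have sge: "s \<ge> 0" unfolding s_def by blast
  then have sre: "s = complex_of_real (Re s)" and sR: "Re s > 0" using s0
    by (auto simp: less_eq_complex_def complex_eq_iff)
  have "\<mu> * s = (A *\<^sub>v y) \<bullet>c y" unfolding s_def y(4) by simp
  also have "\<dots> = y \<bullet>c (A *\<^sub>v y)" using cscalar_adj[OF A y(1) y(1)] h by simp
  also have "\<dots> = cnj \<mu> * s" unfolding s_def y(4) using y(1) 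
    by (simp add: conjugate_smult_vec)
  finally have "\<mu> = cnj \<mu>" using s0 by simp
  then have mu: "\<mu> = complex_of_real (Re \<mu>)" by (simp add: complex_eq_iff)
  define a where "a = complex_of_real (1 / sqrt (Re s))"
  define x where "x = a \<cdot>\<^sub>v y"
  have xc: "x \<in> carrier_vec n" unfolding x_def using y by simp
  have "x \<bullet>c x = a * cnj a * s" unfolding x_def s_def using y(1) by (simp add: conjugate_smult_vec)
  also have "\<dots> = 1" unfolding a_def using sR
    by (subst sre) (simp add: of_real_mult[symmetric] del: of_real_mult)
  finally have xx: "x \<bullet>c x = 1" .
  have xo: "\<forall>i<k. x \<bullet>c u i = 0" unfolding x_def using orth c y(1) by simp
  have "A *\<^sub>v x = complex_of_real (Re \<mu>) \<cdot>\<^sub>v x" unfolding x_def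
    using A y(1) y(4) mu by (simp add: mult_mat_vec[of _ n n] smult_smult_assoc mult.commute)
  then show ?thesis using xc xx xo by blast
qed

lemma onb_exists:
  fixes A :: "complex mat"
  assumes A: "A \<in> carrier_mat n n" and h: "mat_adjoint A = A"
  shows "k \<le> n \<Longrightarrow> \<exists>u lam. (\<forall>i<k. u i \<in> carrier_vec n) \<and>
    (\<forall>i<k. \<forall>j<k. u j \<bullet>c u i = (if i = j then 1 else 0)) \<and>
    (\<forall>i<k. A *\<^sub>v u i = complex_of_real (lam i) \<cdot>\<^sub>v u i)"
proof (induction k)
  case 0
  then show ?case by auto
next
  case (Suc k)
  then obtain u lam where c: "\<forall>i<k. u i \<in> carrier_vec n"
    and o: "\<forall>i<k. \<forall>j<k. u j \<bullet>c u i = (if i = j then 1 else 0)"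
    and e: "\<forall>i<k. A *\<^sub>v u i = complex_of_real (lam i) \<cdot>\<^sub>v u i" by auto
  obtain x m where x: "x \<in> carrier_vec n" "x \<bullet>c x = 1" "\<forall>i<k. x \<bullet>c u i = 0"
     "A *\<^sub>v x = complex_of_real m \<cdot>\<^sub>v x"
    using onb_step[OF A h _ c o e] Suc.prems by auto
  define u' where "u' = u(k := x)"
  define lam' where "lam' = lam(k := m)"
  have c': "\<forall>i<Suc k. u' i \<in> carrier_vec n" using c x unfolding u'_def by (auto simp: less_Suc_eq)
  have o': "\<forall>i<Suc k. \<forall>j<Suc k. u' j \<bullet>c u' i = (if i = j then 1 else 0)"
  proof (intro allI impI)
    fix i j assume ij: "i < Suc k" "j < Suc k"
    show "u' j \<bullet>c u' i = (if i = j then 1 else 0)"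
    proof (cases "i = k")
      case True
      show ?thesis
      proof (cases "j = k")
        case True then show ?thesis using \<open>i = k\<close> x unfolding u'_def by simp
      next
        case False
        then have "j < k" using ij by simp
        then have "u j \<bullet>c x = cnj (x \<bullet>c u j)" using cprod_sym c x by blast
        then show ?thesis using False \<open>i = k\<close> x \<open>j < k\<close> unfolding u'_def by simp
      qed
    next
      case False
      then have "i < k" using ij by simp
      show ?thesis
      proof (cases "j = k")
        case True then show ?thesis using \<open>i < k\<close> x unfolding u'_def by simp
      next
        case False
        then show ?thesis using \<open>i < k\<close> ij o unfolding u'_def by simp
      qed
    qed
  qed
  have e': "\<forall>i<Suc k. A *\<^sub>v u' i = complex_of_real (lam' i) \<cdot>\<^sub>v u' i"
    using e x unfolding u'_def lam'_def by (auto simp: less_Suc_eq)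
  show ?case using c' o' e' by blast
qed

lemma spectral:
  fixes A :: "complex mat"
  assumes A: "A \<in> carrier_mat n n" and h: "mat_adjoint A = A"
  shows "\<exists>U d. unitary_mat n U \<and> A = U * diag_of n (\<lambda>i. complex_of_real (d i)) * mat_adjoint U"
proof -
  obtain u lam where c: "\<forall>i<n. u i \<in> carrier_vec n"
    and o: "\<forall>i<n. \<forall>j<n. u j \<bullet>c u i = (if i = j then 1 else 0)"
    and e: "\<forall>i<n. A *\<^sub>v u i = complex_of_real (lam i) \<cdot>\<^sub>v u i"
    using onb_exists[OF A h, of n] by auto
  let ?U = "Umat n n u" and ?D = "diag_of n (\<lambda>i. complex_of_real (lam i))"
  have U: "?U \<in> carrier_mat n n" by simp
  have Ua: "mat_adjoint ?U \<in> carrier_mat n n" using adj_carrier[of "Umat n n u"] by simp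
  have UU: "mat_adjoint ?U * ?U = 1\<^sub>m n" by (rule Umat_UU[OF c o])
  have UU2: "?U * mat_adjoint ?U = 1\<^sub>m n" by (rule mat_mult_left_right_inverse[OF Ua U UU])
  have AU: "A * ?U = ?U * ?D" by (rule Umat_AU[OF A c e])
  have "A = A * (?U * mat_adjoint ?U)" using UU2 A by simp
  also have "\<dots> = (A * ?U) * mat_adjoint ?U" using assoc_mult_mat[OF A U Ua] by simp
  also have "\<dots> = ?U * ?D * mat_adjoint ?U" using AU by simp
  finally have "A = ?U * ?D * mat_adjoint ?U" .
  moreover have "unitary_mat n ?U" unfolding unitary_mat_def using UU UU2 by simp
  ultimately show ?thesis by blast
qed

lemma diag_mult_index: "W \<in> carrier_mat n m \<Longrightarrow> i < n \<Longrightarrow> j < m \<Longrightarrow>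
  (diag_of n g * W) $$ (i,j) = g i * W $$ (i,j)"
  unfolding diag_of_def by (simp add: scalar_prod_def, subst sum.remove[of _ i], auto)

lemma mult_diag_index: "W \<in> carrier_mat n m \<Longrightarrow> i < n \<Longrightarrow> j < m \<Longrightarrow>
  (W * diag_of m g) $$ (i,j) = W $$ (i,j) * g j"
  unfolding diag_of_def by (simp add: scalar_prod_def if_distrib cong: if_cong)

lemma diag_comm:
  assumes W: "W \<in> carrier_mat n n"
    and e: "diag_of n (\<lambda>i. complex_of_real (d1 i)) * W = W * diag_of n (\<lambda>i. complex_of_real (d2 i))"
  shows "diag_of n (\<lambda>i. complex_of_real (f (d1 i))) * W = W * diag_of n (\<lambda>i. complex_of_real (f (d2 i)))"
proof (rule eq_matI)
  fix i j assume ij: "i < dim_row (W * diag_of n (\<lambda>i. complex_of_real (f (d2 i))))"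
    "j < dim_col (W * diag_of n (\<lambda>i. complex_of_real (f (d2 i))))"
  then have i: "i < n" and j: "j < n" using W by (auto simp: diag_of_def)
  have "complex_of_real (d1 i) * W $$ (i,j) = W $$ (i,j) * complex_of_real (d2 j)"
    using arg_cong[OF e, of "\<lambda>M. M $$ (i,j)"] diag_mult_index[OF W i j] mult_diag_index[OF W i j] by simp
  then have "W $$ (i,j) = 0 \<or> d1 i = d2 j" by (auto simp: mult.commute)
  then show "(diag_of n (\<lambda>i. complex_of_real (f (d1 i))) * W) $$ (i,j) =
     (W * diag_of n (\<lambda>i. complex_of_real (f (d2 i)))) $$ (i,j)"
    using diag_mult_index[OF W i j] mult_diag_index[OF W i j] by (auto simp: mult.commute)
qed (use W in \<open>auto simp: diag_of_def\<close>)

lemma unitary_carrier: "unitary_mat n U \<Longrightarrow> U \<in> carrier_mat n n"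
  unfolding unitary_mat_def by auto

lemma mat_fun_eq:
  assumes U: "unitary_mat n U" and A: "A = U * diag_of n (\<lambda>i. complex_of_real (d i)) * mat_adjoint U"
  shows "mat_fun n f A = U * diag_of n (\<lambda>i. complex_of_real (f (d i))) * mat_adjoint U"
proof -
  let ?P = "\<lambda>B. \<exists>U d. unitary_mat n U
      \<and> A = U * diag_of n (\<lambda>i. complex_of_real (d i)) * mat_adjoint U
      \<and> B = U * diag_of n (\<lambda>i. complex_of_real (f (d i))) * mat_adjoint U"
  have "?P (mat_fun n f A)" unfolding mat_fun_def
    by (rule someI_ex) (use U A in blast)
  then obtain V e where V: "unitary_mat n V"
    and A2: "A = V * diag_of n (\<lambda>i. complex_of_real (e i)) * mat_adjoint V"
    and B: "mat_fun n f A = V * diag_of n (\<lambda>i. complex_of_real (f (e i))) * mat_adjoint V" by blast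
  let ?D = "diag_of n (\<lambda>i. complex_of_real (d i))" and ?E = "diag_of n (\<lambda>i. complex_of_real (e i))"
  let ?FD = "diag_of n (\<lambda>i. complex_of_real (f (d i)))" and ?FE = "diag_of n (\<lambda>i. complex_of_real (f (e i)))"
  have Uc: "U \<in> carrier_mat n n" and Ua: "mat_adjoint U \<in> carrier_mat n n"
    and UU: "mat_adjoint U * U = 1\<^sub>m n" and UU2: "U * mat_adjoint U = 1\<^sub>m n"
    using U unfolding unitary_mat_def by auto
  have Vc: "V \<in> carrier_mat n n" and Va: "mat_adjoint V \<in> carrier_mat n n"
    and VV: "mat_adjoint V * V = 1\<^sub>m n" and VV2: "V * mat_adjoint V = 1\<^sub>m n"
    using V unfolding unitary_mat_def by auto
  have D: "?D \<in> carrier_mat n n" "?E \<in> carrier_mat n n" "?FD \<in> carrier_mat n n" "?FE \<in> carrier_mat n n"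
    by simp_all
  define W where "W = mat_adjoint V * U"
  have Wc: "W \<in> carrier_mat n n" unfolding W_def using Va Uc by simp
  have "?E * W = mat_adjoint V * A * U"
  proof -
    have "mat_adjoint V * A * U = (mat_adjoint V * V) * ?E * (mat_adjoint V * U)"
      unfolding A2 using Vc Va Uc D by (simp add: assoc_mult_mat[of _ n n _ n _ n] mult_carrier_mat[of _ n n _ n])
    then show ?thesis unfolding W_def using VV D by simp
  qed
  moreover have "W * ?D = mat_adjoint V * A * U"
  proof -
    have "mat_adjoint V * A * U = (mat_adjoint V * U) * ?D * (mat_adjoint U * U)"
      unfolding A using Uc Va Ua D by (simp add: assoc_mult_mat[of _ n n _ n _ n] mult_carrier_mat[of _ n n _ n])
    then show ?thesis unfolding W_def using UU D Wc[unfolded W_def] by simp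
  qed
  ultimately have "?E * W = W * ?D" by simp
  from diag_comm[OF Wc this] have FW: "?FE * W = W * ?FD" .
  have "V * ?FE * mat_adjoint V = V * (?FE * W) * mat_adjoint U"
    unfolding W_def using Vc Va Uc Ua D UU2 by (simp add: assoc_mult_mat[of _ n n _ n _ n] mult_carrier_mat[of _ n n _ n])
  also have "\<dots> = V * (W * ?FD) * mat_adjoint U" using FW by simp
  also have "\<dots> = (V * mat_adjoint V) * (U * ?FD * mat_adjoint U)"
    unfolding W_def using Vc Va Uc Ua D by (simp add: assoc_mult_mat[of _ n n _ n _ n] mult_carrier_mat[of _ n n _ n])
  also have "\<dots> = U * ?FD * mat_adjoint U"
    unfolding VV2 using Uc Ua D by (simp add: mult_carrier_mat[of _ n n _ n])
  finally show ?thesis using B by simp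
qed

lemma supp_gen: assumes "v \<in> carrier_vec n" "A *\<^sub>v v = c \<cdot>\<^sub>v v" "c \<noteq> 0"
  shows "v \<in> supp n A"
proof -
  interpret vec_space "TYPE(complex)" n .
  have "{v \<in> carrier_vec n. \<exists>c. c \<noteq> 0 \<and> A *\<^sub>v v = c \<cdot>\<^sub>v v} \<subseteq> carrier_vec n" by auto
  from in_own_span[OF this] show ?thesis unfolding supp_def using assms by blast
qed

lemma supp_orth: fixes \<sigma> :: "complex mat"
  assumes S: "\<sigma> \<in> carrier_mat n n" and h: "mat_adjoint \<sigma> = \<sigma>" and u: "u \<in> carrier_vec n"
    and su: "\<sigma> *\<^sub>v u = 0\<^sub>v n" and v: "v \<in> supp n \<sigma>"
  shows "v \<bullet>c u = 0"
proof -
  interpret vec_space "TYPE(complex)" n .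
  let ?G = "{v \<in> carrier_vec n. \<exists>c. c \<noteq> 0 \<and> \<sigma> *\<^sub>v v = c \<cdot>\<^sub>v v}"
  from v have "v \<in> span ?G" unfolding supp_def by simp
  from in_spanE[OF this] obtain a A where vA: "v = lincomb a A" and fin: "finite A" and AG: "A \<subseteq> ?G"
    by auto
  have Ac: "A \<subseteq> carrier_vec n" using AG by auto
  have w0: "w \<bullet>c u = 0" if wA: "w \<in> A" for w
  proof -
    obtain c where w: "w \<in> carrier_vec n" "c \<noteq> 0" "\<sigma> *\<^sub>v w = c \<cdot>\<^sub>v w" using AG wA by auto
    have "c * (w \<bullet>c u) = (\<sigma> *\<^sub>v w) \<bullet>c u" using w u by simp
    also have "\<dots> = w \<bullet>c (\<sigma> *\<^sub>v u)" using cscalar_adj[OF S w(1) u] h by simp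
    also have "\<dots> = 0" using su w by simp
    finally show ?thesis using w by simp
  qed
  have "v \<bullet>c u = (\<Sum>i<n. (\<Sum>w\<in>A. a w * w $ i) * cnj (u $ i))"
    using u vA lincomb_index[OF _ Ac] by (simp add: cprod_sum[OF u])
  also have "\<dots> = (\<Sum>w\<in>A. a w * (\<Sum>i<n. w $ i * cnj (u $ i)))"
    by (simp add: sum_distrib_left sum_distrib_right sum.swap[of _ A] mult_ac)
  also have "\<dots> = (\<Sum>w\<in>A. a w * (w \<bullet>c u))" by (simp add: cprod_sum[OF u])
  also have "\<dots> = 0" using w0 by simp
  finally show ?thesis .
qed

lemma decomp_col: fixes A :: "complex mat"
  assumes U: "unitary_mat n U" and A: "A = U * diag_of n d * mat_adjoint U" and i: "i < n"
  shows "A *\<^sub>v col U i = d i \<cdot>\<^sub>v col U i"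
proof -
  have Uc: "U \<in> carrier_mat n n" and Ua: "mat_adjoint U \<in> carrier_mat n n"
    and UU: "mat_adjoint U * U = 1\<^sub>m n" using U unfolding unitary_mat_def by auto
  have AU: "A * U = U * diag_of n d"
  proof -
    have "A * U = U * diag_of n d * (mat_adjoint U * U)" unfolding A using Uc Ua
      by (simp add: assoc_mult_mat[of _ n n _ n _ n] mult_carrier_mat[of _ n n _ n])
    then show ?thesis using UU right_mult_one_mat[OF mult_carrier_mat[OF Uc diag_of_carrier]] by simp
  qed
  have Ac: "A \<in> carrier_mat n n" unfolding A using Uc Ua by (simp add: mult_carrier_mat[of _ n n _ n])
  show ?thesis
  proof (rule eq_vecI)
    fix r assume "r < dim_vec (d i \<cdot>\<^sub>v col U i)"
    then have r: "r < n" using Uc by simp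
    have "(A *\<^sub>v col U i) $ r = (A * U) $$ (r,i)" using Ac Uc r i by simp
    also have "\<dots> = U $$ (r,i) * d i" unfolding AU using mult_diag_index[OF Uc r i] .
    finally show "(A *\<^sub>v col U i) $ r = (d i \<cdot>\<^sub>v col U i) $ r" using r i Uc by simp
  qed (use Ac Uc in simp)
qed

lemma mtrace_unitary: assumes U: "unitary_mat n U" and X: "X \<in> carrier_mat n n"
  shows "mtrace (U * X * mat_adjoint U) = mtrace X"
proof -
  have Uc: "U \<in> carrier_mat n n" and Ua: "mat_adjoint U \<in> carrier_mat n n"
    and UU: "mat_adjoint U * U = 1\<^sub>m n" using U unfolding unitary_mat_def by auto
  have "mtrace (U * X * mat_adjoint U) = mtrace (U * (X * mat_adjoint U))"
    using Uc X Ua by simp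
  also have "\<dots> = mtrace ((X * mat_adjoint U) * U)"
    by (rule mtrace_comm[OF Uc]) (use X Ua in simp)
  also have "\<dots> = mtrace (X * (mat_adjoint U * U))" using Uc X Ua by simp
  finally show ?thesis using UU X by simp
qed

lemma mtrace_diag: "mtrace (diag_of n g) = (\<Sum>i<n. g i)"
  unfolding mtrace_def diag_of_def by simp

lemma mtrace_mult_diag: assumes X: "X \<in> carrier_mat n n"
  shows "mtrace (X * diag_of n g) = (\<Sum>i<n. X $$ (i,i) * g i)"
  unfolding mtrace_def using X mult_diag_index[OF X] by simp

lemma quad_entry: fixes B :: "complex mat" assumes B: "B \<in> carrier_mat n n" and V: "V \<in> carrier_mat n n" and j: "j < n"
  shows "(mat_adjoint V * B * V) $$ (j,j) = (B *\<^sub>v col V j) \<bullet>c col V j"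
proof -
  have Va: "mat_adjoint V \<in> carrier_mat n n" using V adj_carrier[of V] by auto
  have "(mat_adjoint V * B * V) $$ (j,j) = (mat_adjoint V * (B * V)) $$ (j,j)"
    using assoc_mult_mat[OF Va B V] by simp
  also have "\<dots> = (\<Sum>l<n. cnj (V $$ (l,j)) * (B * V) $$ (l,j))"
    using B V j by (simp add: scalar_prod_def atLeast0LessThan)
  also have "\<dots> = (B *\<^sub>v col V j) \<bullet>c col V j"
    using B V j by (simp add: cprod_sum[of _ n] mult.commute)
  finally show ?thesis .
qed

lemma psd_quad: assumes "psd_mat n B" "v \<in> carrier_vec n"
  shows "\<exists>r\<ge>0. (B *\<^sub>v v) \<bullet>c v = complex_of_real r"
  using assms unfolding psd_mat_def by auto

lemma decomp_inner: fixes A :: "complex mat"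
  assumes U: "unitary_mat n U" and A: "A = U * diag_of n g * mat_adjoint U"
  shows "mat_adjoint U * A * U = diag_of n g"
proof -
  have Uc: "U \<in> carrier_mat n n" and Ua: "mat_adjoint U \<in> carrier_mat n n"
    and UU: "mat_adjoint U * U = 1\<^sub>m n" using U unfolding unitary_mat_def by auto
  have "mat_adjoint U * A * U = (mat_adjoint U * U) * diag_of n g * (mat_adjoint U * U)"
    unfolding A using Uc Ua by (simp add: assoc_mult_mat[of _ n n _ n _ n] mult_carrier_mat[of _ n n _ n])
  then show ?thesis using UU left_mult_one_mat[OF diag_of_carrier] right_mult_one_mat[OF diag_of_carrier] by simp
qed

lemma eig_nonneg: assumes P: "psd_mat n A" and U: "unitary_mat n U"
  and A: "A = U * diag_of n (\<lambda>i. complex_of_real (d i)) * mat_adjoint U" and i: "i < n"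
  shows "d i \<ge> 0"
proof -
  have Uc: "U \<in> carrier_mat n n" using U unfolding unitary_mat_def by auto
  have Ac: "A \<in> carrier_mat n n" using P psd_carrier by auto
  have "complex_of_real (d i) = (mat_adjoint U * A * U) $$ (i,i)"
    using decomp_inner[OF U A] i by (simp add: diag_of_def)
  also have "\<dots> = (A *\<^sub>v col U i) \<bullet>c col U i" by (rule quad_entry[OF Ac Uc i])
  moreover have "col U i \<in> carrier_vec n" using Uc by (auto simp: carrier_vecI)
  ultimately obtain r where "r \<ge> 0" "complex_of_real (d i) = complex_of_real r"
    using psd_quad[OF P, of "col U i"] by auto
  then show ?thesis by simp
qed

lemma eig_sum: assumes U: "unitary_mat n U"
  and A: "A = U * diag_of n (\<lambda>i. complex_of_real (d i)) * mat_adjoint U"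
  shows "mtrace A = complex_of_real (\<Sum>i<n. d i)"
  using mtrace_unitary[OF U diag_of_carrier] A mtrace_diag by simp

lemma trace_fun: assumes U: "unitary_mat n U"
  and A: "A = U * diag_of n (\<lambda>i. complex_of_real (d i)) * mat_adjoint U"
  shows "mtrace (mat_fun n f A) = complex_of_real (\<Sum>i<n. f (d i))"
  using eig_sum[OF U mat_fun_eq[OF U A]] .

lemma trace_prod_fun: assumes B: "B \<in> carrier_mat n n" and V: "unitary_mat n V"
  and S: "S = V * diag_of n (\<lambda>i. complex_of_real (e i)) * mat_adjoint V"
  shows "mtrace (B * mat_fun n g S) = (\<Sum>j<n. (mat_adjoint V * B * V) $$ (j,j) * complex_of_real (g (e j)))"
proof -
  have Vc: "V \<in> carrier_mat n n" and Va: "mat_adjoint V \<in> carrier_mat n n" using V unfolding unitary_mat_def by auto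
  let ?G = "diag_of n (\<lambda>i. complex_of_real (g (e i)))"
  have "mtrace (B * mat_fun n g S) = mtrace ((B * V * ?G) * mat_adjoint V)"
    unfolding mat_fun_eq[OF V S] using B Vc Va
    by (simp add: assoc_mult_mat[of _ n n _ n _ n] mult_carrier_mat[of _ n n _ n])
  also have "\<dots> = mtrace (mat_adjoint V * (B * V * ?G))"
    by (rule mtrace_comm) (use B Vc Va in \<open>simp_all add: mult_carrier_mat[of _ n n _ n]\<close>)
  also have "\<dots> = mtrace ((mat_adjoint V * B * V) * ?G)"
    using B Vc Va by (simp add: assoc_mult_mat[of _ n n _ n _ n] mult_carrier_mat[of _ n n _ n])
  also have "\<dots> = (\<Sum>j<n. (mat_adjoint V * B * V) $$ (j,j) * complex_of_real (g (e j)))"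
    by (rule mtrace_mult_diag) (use B Vc Va in \<open>simp add: mult_carrier_mat[of _ n n _ n]\<close>)
  finally show ?thesis .
qed

lemma pow_supp_deriv: "DERIV (\<lambda>a. pow_supp (a + s) x) a0 :> pow_supp (a0 + s) x * log_supp x"
proof (cases "x > 0")
  case True
  have "DERIV (\<lambda>a. x powr (a + s)) a0 :> x powr (a0 + s) * (1 * ln x + 0 * (a0 + s) / x)"
    by (rule DERIV_powr) (use True in \<open>auto intro!: derivative_eq_intros\<close>)
  then show ?thesis using True unfolding pow_supp_def log_supp_def by simp
next
  case False
  then show ?thesis unfolding pow_supp_def log_supp_def by simp
qed

lemma log_ratio_lim: assumes d: "DERIV f 1 :> D" and f1: "f 1 = (1::real)"
  shows "((\<lambda>a. ln (f a) / (a - 1)) \<longlongrightarrow> D) (at 1)"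
proof -
  have "DERIV (\<lambda>a. ln (f a)) 1 :> inverse (f 1) * D"
    by (rule DERIV_chain'[OF d]) (use f1 DERIV_ln[of 1] in simp)
  then have "DERIV (\<lambda>a. ln (f a)) 1 :> D" using f1 by simp
  then show ?thesis unfolding has_field_derivative_iff using f1 by simp
qed

lemma main_limit:
  fixes F G K :: "real \<Rightarrow> real"
  assumes dF: "DERIV F 1 :> DF" and F1: "F 1 = 1" and dG: "DERIV G 1 :> DG" and G1: "G 1 = 1"
    and dK: "DERIV K 1 :> DK" and K1: "K 1 = 1"
  shows "((\<lambda>a. a / (1 - a) * ln (F a) - 1 / (1 - a) * ln (G a) + ln (K a)) \<longlongrightarrow> DG - DF) (at 1)"
proof -
  have eq: "a / (1 - a) * ln (F a) - 1 / (1 - a) * ln (G a) + ln (K a) =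
     - a * (ln (F a) / (a - 1)) + ln (G a) / (a - 1) + ln (K a)" for a :: real
  proof (cases "a = 1")
    case True then show ?thesis by simp
  next
    case False
    then have "a - 1 \<noteq> 0" "1 - a \<noteq> 0" by auto
    then show ?thesis by (simp add: field_simps)
  qed
  have l1: "((\<lambda>a. - a * (ln (F a) / (a - 1))) \<longlongrightarrow> - 1 * DF) (at 1)"
    by (intro tendsto_intros log_ratio_lim[OF dF F1])
  have l2: "((\<lambda>a. ln (G a) / (a - 1)) \<longlongrightarrow> DG) (at 1)" by (rule log_ratio_lim[OF dG G1])
  have "(K \<longlongrightarrow> K 1) (at 1)" using DERIV_isCont[OF dK] by (simp add: isCont_def)
  then have l3: "((\<lambda>a. ln (K a)) \<longlongrightarrow> 0) (at 1)" using tendsto_ln[of K "K 1"] K1 by simp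
  have "((\<lambda>a. - a * (ln (F a) / (a - 1)) + ln (G a) / (a - 1) + ln (K a)) \<longlongrightarrow> - 1 * DF + DG + 0) (at 1)"
    by (intro tendsto_add l1 l2 l3)
  then show ?thesis unfolding eq by simp
qed

lemma diag_mult_vec_index: "w \<in> carrier_vec n \<Longrightarrow> i < n \<Longrightarrow> (diag_of n g *\<^sub>v w) $ i = g i * w $ i"
  unfolding diag_of_def by (simp add: scalar_prod_def, subst sum.remove[of _ i], auto)

lemma adj_vec_index: fixes U :: "complex mat"
  assumes U: "U \<in> carrier_mat n n" and u: "u \<in> carrier_vec n" and i: "i < n"
  shows "(mat_adjoint U *\<^sub>v u) $ i = cnj (col U i \<bullet>c u)"
  using U u i by (simp add: scalar_prod_def mult.commute)

lemma cj_zero: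
  fixes \<rho> \<sigma> :: "complex mat"
  assumes Pr: "psd_mat n \<rho>" and Ps: "psd_mat n \<sigma>"
    and U: "unitary_mat n U" and R: "\<rho> = U * diag_of n (\<lambda>i. complex_of_real (d i)) * mat_adjoint U"
    and V: "unitary_mat n V" and S: "\<sigma> = V * diag_of n (\<lambda>i. complex_of_real (e i)) * mat_adjoint V"
    and sub: "supp n \<rho> \<subseteq> supp n \<sigma>" and j: "j < n" and ej: "e j = 0"
  shows "(mat_adjoint V * \<rho> * V) $$ (j,j) = 0"
proof -
  have Uc: "U \<in> carrier_mat n n" and Ua: "mat_adjoint U \<in> carrier_mat n n" using U unfolding unitary_mat_def by auto
  have Vc: "V \<in> carrier_mat n n" using V unfolding unitary_mat_def by auto
  have Rc: "\<rho> \<in> carrier_mat n n" using Pr psd_carrier by auto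
  have Sc: "\<sigma> \<in> carrier_mat n n" using Ps psd_carrier by auto
  define u where "u = col V j"
  have uc: "u \<in> carrier_vec n" unfolding u_def using Vc by (auto simp: carrier_vecI)
  have "\<sigma> *\<^sub>v u = 0 \<cdot>\<^sub>v u" unfolding u_def using decomp_col[OF V S j] ej by simp
  then have su: "\<sigma> *\<^sub>v u = 0\<^sub>v n" using uc by (auto intro!: eq_vecI)
  define w where "w = mat_adjoint U *\<^sub>v u"
  have wc: "w \<in> carrier_vec n" unfolding w_def using Ua uc by simp
  have Dw: "diag_of n (\<lambda>i. complex_of_real (d i)) *\<^sub>v w = 0\<^sub>v n"
  proof (rule eq_vecI)
    fix i assume "i < dim_vec (0\<^sub>v n :: complex vec)"
    then have i: "i < n" by simp
    have "complex_of_real (d i) * w $ i = 0"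
    proof (cases "d i = 0")
      case False
      have "col U i \<in> supp n \<rho>"
        by (rule supp_gen[OF _ decomp_col[OF U R i]]) (use Uc False in \<open>auto simp: carrier_vecI\<close>)
      then have "col U i \<in> supp n \<sigma>" using sub by auto
      then have "col U i \<bullet>c u = 0" using supp_orth[OF Sc psd_hermitian[OF Ps] uc su] by blast
      then show ?thesis unfolding w_def using adj_vec_index[OF Uc uc i] by simp
    qed simp
    then show "(diag_of n (\<lambda>i. complex_of_real (d i)) *\<^sub>v w) $ i = 0\<^sub>v n $ i"
      using diag_mult_vec_index[OF wc i] i by simp
  qed (simp add: diag_of_def)
  have "\<rho> *\<^sub>v u = U *\<^sub>v (diag_of n (\<lambda>i. complex_of_real (d i)) *\<^sub>v w)"
    unfolding R w_def using assoc_mult_mat_vec[OF mult_carrier_mat[OF Uc diag_of_carrier] Ua uc]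
      assoc_mult_mat_vec[OF Uc diag_of_carrier wc[unfolded w_def]] by simp
  also have "\<dots> = 0\<^sub>v n" unfolding Dw using Uc by (intro eq_vecI) (auto simp: scalar_prod_def)
  finally have "\<rho> *\<^sub>v u = 0\<^sub>v n" .
  then show ?thesis using quad_entry[OF Rc Vc j] uc unfolding u_def by simp
qed

lemma pow_supp_deriv1: "DERIV (\<lambda>a. pow_supp (a - 1) x) a0 :> pow_supp (a0 - 1) x * log_supp x"
  using pow_supp_deriv[of "-1" x a0] by simp

lemma pow_supp_deriv0: "DERIV (\<lambda>a. pow_supp a x) a0 :> pow_supp a0 x * log_supp x"
  using pow_supp_deriv[of 0 x a0] by simp

lemma pow_supp_0_log: "pow_supp 0 x * log_supp x = log_supp x"
  unfolding pow_supp_def log_supp_def by simp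

lemma pow_supp_1_log: "x \<ge> 0 \<Longrightarrow> pow_supp 1 x * log_supp x = x * log_supp x"
  unfolding pow_supp_def log_supp_def by simp

lemma pow_supp_1: "x \<ge> 0 \<Longrightarrow> pow_supp 1 x = x"
  unfolding pow_supp_def by simp

lemma unitary_adj: "unitary_mat n U \<Longrightarrow> unitary_mat n (mat_adjoint U)"
  unfolding unitary_mat_def by auto

theorem lemma8:
  fixes n :: nat and \<rho> \<sigma> :: "complex mat"
  assumes "density_op n \<rho>" and "density_op n \<sigma>"
  shows "((\<lambda>\<alpha>. renyi_rel_entropy n \<alpha> \<rho> \<sigma>) \<longlongrightarrow> umegaki n \<rho> \<sigma>)
           (at 1 within {0<..})"
proof -
  have Pr: "psd_mat n \<rho>" and tr: "mtrace \<rho> = 1" and Ps: "psd_mat n \<sigma>" and ts: "mtrace \<sigma> = 1"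
    using assms unfolding density_op_def by auto
  have Rc: "\<rho> \<in> carrier_mat n n" and Sc: "\<sigma> \<in> carrier_mat n n" using Pr Ps psd_carrier by auto
  obtain U d where U: "unitary_mat n U" and R: "\<rho> = U * diag_of n (\<lambda>i. complex_of_real (d i)) * mat_adjoint U"
    using spectral[OF Rc psd_hermitian[OF Pr]] by blast
  obtain V e where V: "unitary_mat n V" and S: "\<sigma> = V * diag_of n (\<lambda>i. complex_of_real (e i)) * mat_adjoint V"
    using spectral[OF Sc psd_hermitian[OF Ps]] by blast
  have Uc: "U \<in> carrier_mat n n" and Vc: "V \<in> carrier_mat n n" using U V unfolding unitary_mat_def by auto
  have Ua: "mat_adjoint U \<in> carrier_mat n n" and Va: "mat_adjoint V \<in> carrier_mat n n"
    using U V unfolding unitary_mat_def by auto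
  show ?thesis
  proof (cases "supp n \<rho> \<subseteq> supp n \<sigma>")
    case False
    then show ?thesis unfolding renyi_rel_entropy_def umegaki_def by simp
  next
    case True
    define c where "c j = Re ((mat_adjoint V * \<rho> * V) $$ (j,j))" for j
    have cR: "(mat_adjoint V * \<rho> * V) $$ (j,j) = complex_of_real (c j) \<and> c j \<ge> 0" if j: "j < n" for j
    proof -
      have "col V j \<in> carrier_vec n" using Vc by (auto simp: carrier_vecI)
      then obtain r where "r \<ge> 0" "(\<rho> *\<^sub>v col V j) \<bullet>c col V j = complex_of_real r"
        using psd_quad[OF Pr] by blast
      then show ?thesis unfolding c_def quad_entry[OF Rc Vc j] by simp
    qed
    have cz: "c j = 0" if "j < n" "e j = 0" for j
      unfolding c_def using cj_zero[OF Pr Ps U R V S True that] by simp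
    have d0: "d i \<ge> 0" if "i < n" for i using eig_nonneg[OF Pr U R that] .
    have e0: "e i \<ge> 0" if "i < n" for i using eig_nonneg[OF Ps V S that] .
    have dsum: "(\<Sum>i<n. d i) = 1" using eig_sum[OF U R] tr of_real_eq_1_iff by metis
    have esum: "(\<Sum>i<n. e i) = 1" using eig_sum[OF V S] ts of_real_eq_1_iff by metis
    have csum: "(\<Sum>j<n. c j) = 1"
    proof -
      have "complex_of_real (\<Sum>j<n. c j) = (\<Sum>j<n. (mat_adjoint V * \<rho> * V) $$ (j,j))"
        using cR by simp
      also have "\<dots> = mtrace (mat_adjoint V * \<rho> * mat_adjoint (mat_adjoint V))"
        unfolding mtrace_def using Vc by simp
      also have "\<dots> = 1" using mtrace_unitary[OF unitary_adj[OF V] Rc] tr by simp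
      finally show ?thesis using of_real_eq_1_iff by metis
    qed
    define F where "F a = (\<Sum>j<n. c j * pow_supp (a - 1) (e j))" for a
    define G where "G a = (\<Sum>i<n. pow_supp a (d i))" for a
    define K where "K a = (\<Sum>i<n. pow_supp a (e i))" for a
    have Feq: "Re (mtrace (\<rho> * mat_fun n (pow_supp (a - 1)) \<sigma>)) = F a" for a
      unfolding trace_prod_fun[OF Rc V S] F_def using cR by simp
    have Geq: "Re (mtrace (mat_fun n (pow_supp a) \<rho>)) = G a" for a
      unfolding trace_fun[OF U R] G_def by simp
    have Keq: "Re (mtrace (mat_fun n (pow_supp a) \<sigma>)) = K a" for a
      unfolding trace_fun[OF V S] K_def by simp
    define DF where "DF = (\<Sum>j<n. c j * log_supp (e j))"
    define DG where "DG = (\<Sum>i<n. d i * log_supp (d i))"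
    have Ueq: "umegaki n \<rho> \<sigma> = ereal (DG - DF)"
    proof -
      have c1: "\<rho> * mat_fun n log_supp \<rho> \<in> carrier_mat n n"
        unfolding mat_fun_eq[OF U R]
        by (rule mult_carrier_mat[OF Rc mult_carrier_mat[OF mult_carrier_mat[OF Uc diag_of_carrier] Ua]])
      have c2: "\<rho> * mat_fun n log_supp \<sigma> \<in> carrier_mat n n"
        unfolding mat_fun_eq[OF V S]
        by (rule mult_carrier_mat[OF Rc mult_carrier_mat[OF mult_carrier_mat[OF Vc diag_of_carrier] Va]])
      have "mtrace (\<rho> * mat_fun n log_supp \<rho>) = (\<Sum>i<n. complex_of_real (d i) * complex_of_real (log_supp (d i)))"
        unfolding trace_prod_fun[OF Rc U R] decomp_inner[OF U R] by (simp add: diag_of_def)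
      moreover have "mtrace (\<rho> * mat_fun n log_supp \<sigma>) = (\<Sum>j<n. complex_of_real (c j) * complex_of_real (log_supp (e j)))"
        unfolding trace_prod_fun[OF Rc V S] using cR by simp
      ultimately show ?thesis unfolding umegaki_def mtrace_minus[OF c1 c2] DF_def DG_def using True by simp
    qed
    have dF: "DERIV F 1 :> DF"
    proof -
      have "DERIV F 1 :> (\<Sum>j<n. c j * (pow_supp (1 - 1) (e j) * log_supp (e j)))"
        unfolding F_def by (intro DERIV_sum DERIV_cmult pow_supp_deriv1)
      then show ?thesis unfolding DF_def by (simp add: pow_supp_0_log)
    qed
    have F1: "F 1 = 1"
    proof -
      have "F 1 = (\<Sum>j<n. c j)" unfolding F_def
      proof (intro sum.cong refl)
        fix j assume j: "j \<in> {..<n}"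
        show "c j * pow_supp (1 - 1) (e j) = c j"
          using cz[of j] e0[of j] j unfolding pow_supp_def by (cases "e j > 0") auto
      qed
      then show ?thesis using csum by simp
    qed
    have dG: "DERIV G 1 :> DG"
    proof -
      have "DERIV G 1 :> (\<Sum>i<n. pow_supp 1 (d i) * log_supp (d i))"
        unfolding G_def by (intro DERIV_sum pow_supp_deriv0)
      then show ?thesis unfolding DG_def using d0 by (simp add: pow_supp_1_log)
    qed
    have G1: "G 1 = 1" unfolding G_def using d0 dsum by (simp add: pow_supp_1)
    have dK: "DERIV K 1 :> (\<Sum>i<n. pow_supp 1 (e i) * log_supp (e i))"
      unfolding K_def by (intro DERIV_sum pow_supp_deriv0)
    have K1: "K 1 = 1" unfolding K_def using e0 esum by (simp add: pow_supp_1)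
    have lim: "((\<lambda>a. a / (1 - a) * ln (F a) - 1 / (1 - a) * ln (G a) + ln (K a)) \<longlongrightarrow> DG - DF) (at 1)"
      by (rule main_limit[OF dF F1 dG G1 dK K1])
    have req: "renyi_rel_entropy n a \<rho> \<sigma> = ereal (a / (1 - a) * ln (F a) - 1 / (1 - a) * ln (G a) + ln (K a))" for a
      unfolding renyi_rel_entropy_def using True Feq Geq Keq by simp
    have "((\<lambda>a. renyi_rel_entropy n a \<rho> \<sigma>) \<longlongrightarrow> umegaki n \<rho> \<sigma>) (at 1)"
      unfolding req Ueq by (rule tendsto_ereal[OF lim])
    then show ?thesis by (rule tendsto_within_subset) simp
  qed
qed


end
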